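(* Let $q\ge2$ be an integer and $n\ge1$. On $(n+1)$ qudigits one has $$M_q=\big(H_q^{\otimes(n+1)}\big)^{-1}\,F_q^{-1}\,H_q^{\otimes(n+1)}.$$
   Context: Let $D=\{0,\ldots,q-1\}$. A qudigit is a unit vector $\sum_{k=0}^{q-1}c_k|k\rangle$ in a $q$-dimensional space with orthonormal basis $|0\rangle,\ldots,|q-1\rangle$. The $n$-ary modular addition operator $M_q$ acts on basis states by $M_q|x_1,\ldots,x_n,b\rangle=|x_1,\ldots,x_n,(b+x_1+\cdots+x_n)\bmod q\rangle$. The $n$-ary base-$q$ fanout operator $F_q$ acts by $F_q|x_1,\ldots,x_n,b\rangle=|(x_1+b)\bmod q,\ldots,(x_n+b)\bmod q,b\rangle$. The quantum Fourier transform $H_q$ on one qudigit is $H_q|a\rangle=\frac1{\sqrt q}\sum_{b=0}^{q-1}\zeta^{ab}|b\rangle$ with $\zeta=e^{2\pi i/q}$. *)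

theory Defs
  imports Complex_Main
begin

text \<open>Basis states of n+1 qudigits: lists [x_1,...,x_n,b] of length n+1 with entries in D.
  An operator on the space is given by its matrix in this basis,
  K y x = (y-th amplitude of K applied to basis vector x).\<close>

type_synonym qop = "nat list \<Rightarrow> nat list \<Rightarrow> complex"

definition basis :: "nat \<Rightarrow> nat \<Rightarrow> nat list set" where
  "basis q n = {xs. length xs = n + 1 \<and> (\<forall>x\<in>set xs. x < q)}"

definition op_mult :: "nat \<Rightarrow> nat \<Rightarrow> qop \<Rightarrow> qop \<Rightarrow> qop" where
  "op_mult q n K L = (\<lambda>y x. \<Sum>z\<in>basis q n. K y z * L z x)"

definition op_id :: qop where
  "op_id = (\<lambda>y x. if y = x then 1 else 0)"

definition op_eq :: "nat \<Rightarrow> nat \<Rightarrow> qop \<Rightarrow> qop \<Rightarrow> bool" where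
  "op_eq q n K L \<longleftrightarrow> (\<forall>y\<in>basis q n. \<forall>x\<in>basis q n. K y x = L y x)"

definition op_inv :: "nat \<Rightarrow> nat \<Rightarrow> qop \<Rightarrow> qop" where
  "op_inv q n K = (SOME L. op_eq q n (op_mult q n L K) op_id \<and> op_eq q n (op_mult q n K L) op_id)"

definition perm_op :: "(nat list \<Rightarrow> nat list) \<Rightarrow> qop" where
  "perm_op f = (\<lambda>y x. if y = f x then 1 else 0)"

definition modadd_map :: "nat \<Rightarrow> nat list \<Rightarrow> nat list" where
  "modadd_map q xs = butlast xs @ [(last xs + sum_list (butlast xs)) mod q]"

definition M_op :: "nat \<Rightarrow> qop" where
  "M_op q = perm_op (modadd_map q)"

definition fanout_map :: "nat \<Rightarrow> nat list \<Rightarrow> nat list" where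
  "fanout_map q xs = map (\<lambda>x. (x + last xs) mod q) (butlast xs) @ [last xs]"

definition F_op :: "nat \<Rightarrow> qop" where
  "F_op q = perm_op (fanout_map q)"

definition zeta :: "nat \<Rightarrow> complex" where
  "zeta q = cis (2 * pi / real q)"

definition H1 :: "nat \<Rightarrow> nat \<Rightarrow> nat \<Rightarrow> complex" where
  "H1 q b a = zeta q ^ (a * b) / complex_of_real (sqrt (real q))"

definition Htensor :: "nat \<Rightarrow> qop" where
  "Htensor q = (\<lambda>y x. \<Prod>i<length x. H1 q (y ! i) (x ! i))"

end

theory Submission
  imports Defs
begin

lemma finite_basis: "finite (basis q n)"
proof -
  have "basis q n \<subseteq> {xs. set xs \<subseteq> {..<q} \<and> length xs = n + 1}"
    unfolding basis_def by auto
  then show ?thesis by (rule finite_subset) (rule finite_lists_length_eq, simp)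
qed

lemma op_assoc:
  "op_mult q n A (op_mult q n B C) y x = op_mult q n (op_mult q n A B) C y x"
proof -
  have "op_mult q n A (op_mult q n B C) y x = (\<Sum>z\<in>basis q n. \<Sum>w\<in>basis q n. A y z * B z w * C w x)"
    unfolding op_mult_def by (simp add: sum_distrib_left mult.assoc)
  also have "\<dots> = (\<Sum>w\<in>basis q n. \<Sum>z\<in>basis q n. A y z * B z w * C w x)"
    by (rule sum.swap)
  also have "\<dots> = op_mult q n (op_mult q n A B) C y x"
    unfolding op_mult_def by (simp add: sum_distrib_right)
  finally show ?thesis .
qed

lemma op_congL:
  assumes "op_eq q n A A'" "y \<in> basis q n"
  shows "op_mult q n A B y x = op_mult q n A' B y x"
  using assms unfolding op_mult_def op_eq_def by (intro sum.cong) auto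

lemma op_congR:
  assumes "op_eq q n B B'" "x \<in> basis q n"
  shows "op_mult q n A B y x = op_mult q n A B' y x"
  using assms unfolding op_mult_def op_eq_def by (intro sum.cong) auto

lemma op_idL:
  assumes "y \<in> basis q n"
  shows "op_mult q n op_id A y x = A y x"
proof -
  have "op_mult q n op_id A y x = (\<Sum>z\<in>basis q n. if y = z then A z x else 0)"
    unfolding op_mult_def op_id_def by (intro sum.cong) auto
  also have "\<dots> = A y x" using assms finite_basis by simp
  finally show ?thesis .
qed

lemma op_idR:
  assumes "x \<in> basis q n"
  shows "op_mult q n A op_id y x = A y x"
proof -
  have "op_mult q n A op_id y x = (\<Sum>z\<in>basis q n. if z = x then A y z else 0)"
    unfolding op_mult_def op_id_def by (intro sum.cong) auto
  also have "\<dots> = A y x" using assms finite_basis by simp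
  finally show ?thesis .
qed

lemma op_inv_unique:
  assumes "op_eq q n (op_mult q n L K) op_id" "op_eq q n (op_mult q n K L) op_id"
  shows "op_eq q n (op_mult q n (op_inv q n K) K) op_id"
    "op_eq q n (op_mult q n K (op_inv q n K)) op_id"
    "op_eq q n (op_inv q n K) L"
proof -
  let ?P = "\<lambda>L. op_eq q n (op_mult q n L K) op_id \<and> op_eq q n (op_mult q n K L) op_id"
  have "?P (op_inv q n K)" unfolding op_inv_def by (rule someI[of ?P L]) (use assms in auto)
  then show A: "op_eq q n (op_mult q n (op_inv q n K) K) op_id"
    and B: "op_eq q n (op_mult q n K (op_inv q n K)) op_id" by auto
  show "op_eq q n (op_inv q n K) L"
    unfolding op_eq_def
  proof (intro ballI)
    fix y x assume y: "y \<in> basis q n" and x: "x \<in> basis q n"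
    have "op_inv q n K y x = op_mult q n (op_inv q n K) op_id y x" using op_idR[OF x] by simp
    also have "\<dots> = op_mult q n (op_inv q n K) (op_mult q n K L) y x"
      using op_congR[OF assms(2) x] by simp
    also have "\<dots> = op_mult q n (op_mult q n (op_inv q n K) K) L y x" by (rule op_assoc)
    also have "\<dots> = op_mult q n op_id L y x" by (rule op_congL[OF A y])
    also have "\<dots> = L y x" by (rule op_idL[OF y])
    finally show "op_inv q n K y x = L y x" .
  qed
qed

definition Ls :: "nat \<Rightarrow> nat \<Rightarrow> nat list set" where
  "Ls q m = {xs. length xs = m \<and> (\<forall>x\<in>set xs. x < q)}"

lemma basis_Ls: "basis q n = Ls q (Suc n)"
  unfolding basis_def Ls_def by simp

lemma Ls_Suc: "Ls q (Suc m) = (\<lambda>(c, z). c # z) ` ({..<q} \<times> Ls q m)"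
  unfolding Ls_def by (auto simp: length_Suc_conv image_iff)

lemma finite_Ls: "finite (Ls q m)"
proof -
  have "Ls q m \<subseteq> {xs. set xs \<subseteq> {..<q} \<and> length xs = m}"
    unfolding Ls_def by auto
  then show ?thesis by (rule finite_subset) (rule finite_lists_length_eq, simp)
qed

lemma sum_prod_Ls:
  "(\<Sum>z\<in>Ls q m. \<Prod>i<m. f i (z ! i)) = (\<Prod>i<m. \<Sum>c<q. (f i c :: complex))"
proof (induction m arbitrary: f)
  case 0
  have "Ls q 0 = {[]}" unfolding Ls_def by auto
  then show ?case by simp
next
  case (Suc m)
  have inj: "inj_on (\<lambda>(c, z). c # z) ({..<q} \<times> Ls q m)"
    by (auto simp: inj_on_def)
  have "(\<Sum>z\<in>Ls q (Suc m). \<Prod>i<Suc m. f i (z ! i))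
      = (\<Sum>p\<in>{..<q} \<times> Ls q m. \<Prod>i<Suc m. f i ((fst p # snd p) ! i))"
    unfolding Ls_Suc by (subst sum.reindex[OF inj]) (auto intro!: sum.cong)
  also have "\<dots> = (\<Sum>(c, z)\<in>{..<q} \<times> Ls q m. f 0 c * (\<Prod>i<m. f (Suc i) (z ! i)))"
    by (intro sum.cong) (auto simp only: prod.lessThan_Suc_shift nth_Cons_0 nth_Cons_Suc fst_conv snd_conv split: prod.splits)
  also have "\<dots> = (\<Sum>c<q. \<Sum>z\<in>Ls q m. f 0 c * (\<Prod>i<m. f (Suc i) (z ! i)))"
    by (rule sum.cartesian_product[symmetric])
  also have "\<dots> = (\<Sum>c<q. f 0 c) * (\<Prod>i<m. \<Sum>c<q. f (Suc i) c)"
    by (simp only: sum_distrib_left[symmetric] Suc.IH[of "\<lambda>i. f (Suc i)"] sum_distrib_right)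
  also have "\<dots> = (\<Prod>i<Suc m. \<Sum>c<q. f i c)"
    by (simp only: prod.lessThan_Suc_shift)
  finally show ?case .
qed

lemma zeta_pow_q: "q > 0 \<Longrightarrow> zeta q ^ q = 1"
  unfolding zeta_def by (simp add: DeMoivre)

lemma zeta_pow_mod:
  assumes "q > 0"
  shows "zeta q ^ k = zeta q ^ (k mod q)"
proof -
  have "zeta q ^ k = zeta q ^ (q * (k div q) + k mod q)" by simp
  also have "\<dots> = (zeta q ^ q) ^ (k div q) * zeta q ^ (k mod q)"
    by (simp only: power_add power_mult)
  also have "\<dots> = zeta q ^ (k mod q)" using zeta_pow_q[OF assms] by simp
  finally show ?thesis .
qed

lemma zeta_mod:
  assumes "q > 0" "k mod q = k' mod q"
  shows "zeta q ^ k = zeta q ^ k'"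
  using zeta_pow_mod[OF assms(1), of k] zeta_pow_mod[OF assms(1), of k'] assms(2)
  by metis

lemma zeta_ne1:
  assumes "0 < k" "k < q"
  shows "zeta q ^ k \<noteq> 1"
proof
  assume h: "zeta q ^ k = 1"
  have q: "q > 0" using assms by simp
  have inj: "inj_on (\<lambda>k. cis (2 * pi * real k / real q)) {..<q}"
    using bij_betw_roots_unity[OF q] by (simp add: bij_betw_def)
  have eq: "cis (2 * pi * real k / real q) = cis (2 * pi * real 0 / real q)"
  proof -
    have e: "2 * pi * real k / real q = real k * (2 * pi / real q)" by simp
    have "cis (real k * (2 * pi / real q)) = 1" using h unfolding zeta_def DeMoivre .
    then show ?thesis unfolding e by simp
  qed
  have "k = 0" by (rule inj_onD[OF inj eq]) (use assms in auto)
  then show False using assms by simp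
qed

lemma zeta_norm: "norm (zeta q) = 1"
  unfolding zeta_def by simp

lemma zeta_nz: "zeta q \<noteq> 0"
  using zeta_norm[of q] by auto

lemma cnj_zeta_pow: "cnj (zeta q ^ m) = inverse (zeta q ^ m)"
proof -
  have "norm (zeta q ^ m) = 1" by (simp add: norm_power zeta_norm)
  then have "cnj (zeta q ^ m) * zeta q ^ m = 1"
    by (metis complex_norm_square mult.commute of_real_1 power_one)
  then show ?thesis by (metis inverse_unique mult.commute)
qed

lemma H1_sym: "H1 q a b = H1 q b a"
  unfolding H1_def by (simp add: mult.commute)

lemma char_sum:
  assumes "a < q" "b < q"
  shows "(\<Sum>c<q. zeta q ^ (a * c) * inverse (zeta q ^ (b * c))) = (if a = b then of_nat q else 0)"
proof (cases "a = b")
  case True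
  then show ?thesis using zeta_nz by simp
next
  case False
  have q: "q > 0" using assms by simp
  define k where "k = (a + q - b) mod q"
  have k: "0 < k" "k < q" using assms False unfolding k_def
    by (auto simp: mod_if)
  have "zeta q ^ (a * c) * inverse (zeta q ^ (b * c)) = (zeta q ^ k) ^ c" for c
  proof -
    have "zeta q ^ (a * c) = zeta q ^ (k * c + b * c)"
    proof (rule zeta_mod[OF q])
      have "(k * c + b * c) mod q = ((k + b) * c) mod q" by (simp add: algebra_simps)
      also have "\<dots> = (((k + b) mod q) * c) mod q" by (simp add: mod_mult_left_eq)
      also have "(k + b) mod q = (a + q - b + b) mod q" unfolding k_def by (simp add: mod_add_left_eq)
      also have "\<dots> = a" using assms by simp
      finally show "(a * c) mod q = (k * c + b * c) mod q" by simp
    qed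
    then show ?thesis using zeta_nz by (simp add: power_add power_mult)
  qed
  then have "(\<Sum>c<q. zeta q ^ (a * c) * inverse (zeta q ^ (b * c))) = (\<Sum>c<q. (zeta q ^ k) ^ c)"
    by simp
  also have "\<dots> = ((zeta q ^ k) ^ q - 1) / (zeta q ^ k - 1)"
    by (rule geometric_sum[OF zeta_ne1[OF k]])
  also have "(zeta q ^ k) ^ q = 1"
    by (metis power_mult mult.commute zeta_pow_q[OF q] power_one)
  finally have "(\<Sum>c<q. zeta q ^ (a * c) * inverse (zeta q ^ (b * c))) = 0" by simp
  then show ?thesis using False by simp
qed

lemma H1_orth:
  assumes "a < q" "b < q"
  shows "(\<Sum>c<q. cnj (H1 q b c) * H1 q c a) = (if a = b then 1 else 0)"
proof -
  have q: "q > 0" using assms by simp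
  have s: "complex_of_real (sqrt (real q)) * complex_of_real (sqrt (real q)) = of_nat q"
  proof -
    have s0: "sqrt (real q) * sqrt (real q) = real q" by simp
    show ?thesis by (simp only: of_real_mult[symmetric] s0 of_real_of_nat_eq)
  qed
  have "(\<Sum>c<q. cnj (H1 q b c) * H1 q c a)
     = (\<Sum>c<q. zeta q ^ (a * c) * inverse (zeta q ^ (b * c)) / of_nat q)"
  proof (rule sum.cong[OF refl])
    fix c
    have "cnj (H1 q b c) * H1 q c a = inverse (zeta q ^ (c * b)) * zeta q ^ (a * c)
       / (complex_of_real (sqrt (real q)) * complex_of_real (sqrt (real q)))"
      unfolding H1_def complex_cnj_divide complex_cnj_complex_of_real cnj_zeta_pow times_divide_times_eq ..
    then show "cnj (H1 q b c) * H1 q c a = zeta q ^ (a * c) * inverse (zeta q ^ (b * c)) / of_nat q"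
      unfolding s by (simp only: mult.commute[of c b] mult.commute[of "inverse _"])
  qed
  also have "\<dots> = (\<Sum>c<q. zeta q ^ (a * c) * inverse (zeta q ^ (b * c))) / of_nat q"
    by (simp add: sum_divide_distrib)
  also have "\<dots> = (if a = b then 1 else 0)" using char_sum[OF assms] q by simp
  finally show ?thesis .
qed


lemma H1_orth2:
  assumes "a < q" "b < q"
  shows "(\<Sum>c<q. H1 q b c * cnj (H1 q a c)) = (if a = b then 1 else 0)"
proof -
  have "(\<Sum>c<q. H1 q b c * cnj (H1 q a c)) = cnj (\<Sum>c<q. cnj (H1 q b c) * H1 q c a)"
    by (simp add: H1_sym[of q _ a])
  also have "\<dots> = (if a = b then 1 else 0)" using H1_orth[OF assms] by simp
  finally show ?thesis .
qed

lemma prod_delta: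
  assumes "length x = m" "length y = m"
  shows "(\<Prod>i<m. (if x ! i = y ! i then 1 else 0 :: complex)) = (if x = y then 1 else 0)"
proof (cases "x = y")
  case True then show ?thesis by simp
next
  case False
  then obtain i where i: "i < m" "x ! i \<noteq> y ! i" using assms nth_equalityI by metis
  have "(\<Prod>i<m. (if x ! i = y ! i then 1 else 0 :: complex)) = 0"
    using i by (intro prod_zero) auto
  then show ?thesis using False by simp
qed

definition Hinv :: "nat \<Rightarrow> qop" where
  "Hinv q = (\<lambda>y x. \<Prod>i<length y. cnj (H1 q (x ! i) (y ! i)))"

lemma basis_nth: "x \<in> basis q n \<Longrightarrow> i < Suc n \<Longrightarrow> x ! i < q"
  unfolding basis_def by auto

lemma basis_len: "x \<in> basis q n \<Longrightarrow> length x = Suc n"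
  unfolding basis_def by auto

lemma Hinv_left:
  assumes "x \<in> basis q n" "y \<in> basis q n"
  shows "op_mult q n (Hinv q) (Htensor q) y x = op_id y x"
proof -
  have "op_mult q n (Hinv q) (Htensor q) y x
      = (\<Sum>z\<in>Ls q (Suc n). \<Prod>i<Suc n. cnj (H1 q (y ! i) (z ! i)) * H1 q (z ! i) (x ! i))"
    unfolding op_mult_def Hinv_def Htensor_def basis_Ls
  proof (intro sum.cong refl)
    fix z
    have e: "cnj (H1 q (z!i) (y!i)) * H1 q (z!i) (x!i) = cnj (H1 q (y!i) (z!i)) * H1 q (z!i) (x!i)" for i
      using H1_sym[of q "z!i" "y!i"] by simp
    show "(\<Prod>i<length y. cnj (H1 q (z ! i) (y ! i))) * (\<Prod>i<length x. H1 q (z ! i) (x ! i))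
       = (\<Prod>i<Suc n. cnj (H1 q (y ! i) (z ! i)) * H1 q (z ! i) (x ! i))"
      unfolding basis_len[OF assms(1)] basis_len[OF assms(2)] prod.distrib[symmetric] e ..
  qed
  also have "\<dots> = (\<Prod>i<Suc n. \<Sum>c<q. cnj (H1 q (y ! i) c) * H1 q c (x ! i))"
    by (rule sum_prod_Ls)
  also have "\<dots> = (\<Prod>i<Suc n. (if x ! i = y ! i then 1 else 0 :: complex))"
    using basis_nth[OF assms(1)] basis_nth[OF assms(2)] by (intro prod.cong refl H1_orth) auto
  also have "\<dots> = op_id y x"
    using prod_delta[OF basis_len[OF assms(1)] basis_len[OF assms(2)]] unfolding op_id_def by auto
  finally show ?thesis .
qed

lemma Hinv_right:
  assumes "x \<in> basis q n" "y \<in> basis q n"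
  shows "op_mult q n (Htensor q) (Hinv q) y x = op_id y x"
proof -
  have "op_mult q n (Htensor q) (Hinv q) y x
      = (\<Sum>z\<in>Ls q (Suc n). \<Prod>i<Suc n. H1 q (y ! i) (z ! i) * cnj (H1 q (x ! i) (z ! i)))"
    unfolding op_mult_def Hinv_def Htensor_def basis_Ls
  proof (intro sum.cong refl)
    fix z assume "z \<in> Ls q (Suc n)"
    then have l: "length z = Suc n" unfolding Ls_def by simp
    show "(\<Prod>i<length z. H1 q (y ! i) (z ! i)) * (\<Prod>i<length z. cnj (H1 q (x ! i) (z ! i)))
       = (\<Prod>i<Suc n. H1 q (y ! i) (z ! i) * cnj (H1 q (x ! i) (z ! i)))"
      unfolding l prod.distrib[symmetric] ..
  qed
  also have "\<dots> = (\<Prod>i<Suc n. \<Sum>c<q. H1 q (y ! i) c * cnj (H1 q (x ! i) c))"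
    by (rule sum_prod_Ls)
  also have "\<dots> = (\<Prod>i<Suc n. (if x ! i = y ! i then 1 else 0 :: complex))"
    using basis_nth[OF assms(1)] basis_nth[OF assms(2)] by (intro prod.cong refl H1_orth2) auto
  also have "\<dots> = op_id y x"
    using prod_delta[OF basis_len[OF assms(1)] basis_len[OF assms(2)]] unfolding op_id_def by auto
  finally show ?thesis .
qed

lemma H_inv:
  "op_eq q n (op_mult q n (op_inv q n (Htensor q)) (Htensor q)) op_id"
  "op_eq q n (op_mult q n (Htensor q) (op_inv q n (Htensor q))) op_id"
proof -
  have L: "op_eq q n (op_mult q n (Hinv q) (Htensor q)) op_id"
    unfolding op_eq_def using Hinv_left by blast
  have R: "op_eq q n (op_mult q n (Htensor q) (Hinv q)) op_id"
    unfolding op_eq_def using Hinv_right by blast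
  show "op_eq q n (op_mult q n (op_inv q n (Htensor q)) (Htensor q)) op_id"
    by (rule op_inv_unique(1)[OF L R])
  show "op_eq q n (op_mult q n (Htensor q) (op_inv q n (Htensor q))) op_id"
    by (rule op_inv_unique(2)[OF L R])
qed


definition fanin_map :: "nat \<Rightarrow> nat list \<Rightarrow> nat list" where
  "fanin_map q xs = map (\<lambda>x. (x + (q - last xs)) mod q) (butlast xs) @ [last xs]"

lemma basis_snoc:
  assumes "x \<in> basis q n"
  obtains xs b where "x = xs @ [b]" "length xs = n" "\<forall>v\<in>set xs. v < q" "b < q"
proof -
  have l: "length x = Suc n" using assms unfolding basis_def by simp
  then have "x \<noteq> []" by auto
  then have x: "x = butlast x @ [last x]" by simp
  have "\<forall>v\<in>set x. v < q" using assms unfolding basis_def by simp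
  then have "\<forall>v\<in>set (butlast x). v < q" "last x < q" using x
    by (metis in_set_butlastD) (use \<open>x \<noteq> []\<close> \<open>\<forall>v\<in>set x. v < q\<close> in simp)
  then show ?thesis using that[OF x] l by simp
qed

lemma basis_snoc_iff: "xs @ [b] \<in> basis q n \<longleftrightarrow> length xs = n \<and> (\<forall>v\<in>set xs. v < q) \<and> b < q"
  unfolding basis_def by auto

lemma fanout_snoc: "fanout_map q (xs @ [b]) = map (\<lambda>x. (x + b) mod q) xs @ [b]"
  unfolding fanout_map_def by simp

lemma fanin_snoc: "fanin_map q (xs @ [b]) = map (\<lambda>x. (x + (q - b)) mod q) xs @ [b]"
  unfolding fanin_map_def by simp

lemma modadd_snoc: "modadd_map q (xs @ [b]) = xs @ [(b + sum_list xs) mod q]"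
  unfolding modadd_map_def by simp

lemma fanout_in: "q > 0 \<Longrightarrow> x \<in> basis q n \<Longrightarrow> fanout_map q x \<in> basis q n"
  by (erule basis_snoc) (auto simp: fanout_snoc basis_snoc_iff)

lemma fanin_in: "q > 0 \<Longrightarrow> x \<in> basis q n \<Longrightarrow> fanin_map q x \<in> basis q n"
  by (erule basis_snoc) (auto simp: fanin_snoc basis_snoc_iff)

lemma modadd_in: "q > 0 \<Longrightarrow> x \<in> basis q n \<Longrightarrow> modadd_map q x \<in> basis q n"
  by (erule basis_snoc) (auto simp: modadd_snoc basis_snoc_iff)

lemma fanout_fanin: "q > 0 \<Longrightarrow> x \<in> basis q n \<Longrightarrow> fanout_map q (fanin_map q x) = x"
proof (erule basis_snoc)
  fix xs b assume q: "q > 0" and x: "x = xs @ [b]" "\<forall>v\<in>set xs. v < q" "b < q"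
  have "((v + (q - b)) mod q + b) mod q = v" if "v < q" for v
  proof -
    have "((v + (q - b)) mod q + b) mod q = (v + (q - b) + b) mod q" by (simp add: mod_add_left_eq)
    also have "v + (q - b) + b = v + q" using x by simp
    finally show ?thesis using that by simp
  qed
  then show ?thesis using x by (auto simp: fanout_snoc fanin_snoc intro!: map_idI)
qed

lemma fanin_fanout: "q > 0 \<Longrightarrow> x \<in> basis q n \<Longrightarrow> fanin_map q (fanout_map q x) = x"
proof (erule basis_snoc)
  fix xs b assume q: "q > 0" and x: "x = xs @ [b]" "\<forall>v\<in>set xs. v < q" "b < q"
  have "((v + b) mod q + (q - b)) mod q = v" if "v < q" for v
  proof -
    have "((v + b) mod q + (q - b)) mod q = (v + b + (q - b)) mod q" by (simp add: mod_add_left_eq)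
    also have "v + b + (q - b) = v + q" using x by simp
    finally show ?thesis using that by simp
  qed
  then show ?thesis using x by (auto simp: fanout_snoc fanin_snoc intro!: map_idI)
qed

lemma perm_right:
  assumes "f x \<in> basis q n"
  shows "op_mult q n A (perm_op f) y x = A y (f x)"
proof -
  have "op_mult q n A (perm_op f) y x = (\<Sum>z\<in>basis q n. if z = f x then A y z else 0)"
    unfolding op_mult_def perm_op_def by (intro sum.cong) auto
  also have "\<dots> = A y (f x)" using assms finite_basis by simp
  finally show ?thesis .
qed

lemma perm_left:
  assumes "f y \<in> basis q n" "\<And>z. z \<in> basis q n \<Longrightarrow> (y = g z) = (z = f y)"
  shows "op_mult q n (perm_op g) B y x = B (f y) x"
proof -
  have "op_mult q n (perm_op g) B y x = (\<Sum>z\<in>basis q n. if z = f y then B z x else 0)"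
    unfolding op_mult_def perm_op_def using assms(2) by (intro sum.cong) auto
  also have "\<dots> = B (f y) x" using assms finite_basis by simp
  finally show ?thesis .
qed

lemma F_inv:
  assumes q: "q > 0"
  shows "op_eq q n (op_inv q n (F_op q)) (perm_op (fanin_map q))"
proof (rule op_inv_unique(3))
  show "op_eq q n (op_mult q n (perm_op (fanin_map q)) (F_op q)) op_id"
    unfolding op_eq_def F_op_def
  proof (intro ballI)
    fix y x assume y: "y \<in> basis q n" and x: "x \<in> basis q n"
    have "op_mult q n (perm_op (fanin_map q)) (perm_op (fanout_map q)) y x
        = perm_op (fanin_map q) y (fanout_map q x)"
      by (rule perm_right[where f="fanout_map q" and x=x, OF fanout_in[OF q x]])
    also have "\<dots> = op_id y x"
      unfolding perm_op_def op_id_def fanin_fanout[OF q x] ..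
    finally show "op_mult q n (perm_op (fanin_map q)) (perm_op (fanout_map q)) y x = op_id y x" .
  qed
  show "op_eq q n (op_mult q n (F_op q) (perm_op (fanin_map q))) op_id"
    unfolding op_eq_def F_op_def
  proof (intro ballI)
    fix y x assume y: "y \<in> basis q n" and x: "x \<in> basis q n"
    have "op_mult q n (perm_op (fanout_map q)) (perm_op (fanin_map q)) y x
        = perm_op (fanout_map q) y (fanin_map q x)"
      by (rule perm_right[where f="fanin_map q" and x=x, OF fanin_in[OF q x]])
    also have "\<dots> = op_id y x"
      unfolding perm_op_def op_id_def fanout_fanin[OF q x] ..
    finally show "op_mult q n (perm_op (fanout_map q)) (perm_op (fanin_map q)) y x = op_id y x" .
  qed
qed

lemma Htensor_eq:
  assumes "length x = m"
  shows "Htensor q y x = zeta q ^ (\<Sum>i<m. x ! i * y ! i) / complex_of_real (sqrt (real q)) ^ m"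
  unfolding Htensor_def H1_def assms
  by (simp add: prod_dividef power_sum)

lemma key_exp:
  assumes "length xs = n" "length ys = n"
  shows "(\<Sum>i<Suc n. (xs @ [(b + sum_list xs) mod q]) ! i * (ys @ [d]) ! i) mod q
       = (\<Sum>i<Suc n. (xs @ [b]) ! i * (map (\<lambda>v. (v + d) mod q) ys @ [d]) ! i) mod (q::nat)"
proof -
  define S where "S = (\<Sum>i<n. xs ! i * ys ! i)"
  have sx: "sum_list xs = (\<Sum>i<n. xs ! i)"
    using assms(1) by (simp add: sum_list_sum_nth atLeast0LessThan)
  have L: "(\<Sum>i<Suc n. (xs @ [(b + sum_list xs) mod q]) ! i * (ys @ [d]) ! i)
      = S + ((b + sum_list xs) mod q) * d"
  proof -
    have "(\<Sum>i<n. (xs @ [(b + sum_list xs) mod q]) ! i * (ys @ [d]) ! i) = S"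
      unfolding S_def using assms by (intro sum.cong refl) (simp add: nth_append)
    then show ?thesis by (simp only: sum.lessThan_Suc) (simp add: nth_append assms)
  qed
  have R: "(\<Sum>i<Suc n. (xs @ [b]) ! i * (map (\<lambda>v. (v + d) mod q) ys @ [d]) ! i)
      = (\<Sum>i<n. xs ! i * ((ys ! i + d) mod q)) + b * d"
  proof -
    have "(\<Sum>i<n. (xs @ [b]) ! i * (map (\<lambda>v. (v + d) mod q) ys @ [d]) ! i) = (\<Sum>i<n. xs ! i * ((ys ! i + d) mod q))"
      using assms by (intro sum.cong refl) (simp add: nth_append)
    moreover have "(map (\<lambda>v. (v + d) mod q) ys @ [d]) ! n = d"
      using assms by (metis length_map nth_append_length)
    ultimately show ?thesis by (simp only: sum.lessThan_Suc) (simp add: nth_append assms)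
  qed
  have "(S + ((b + sum_list xs) mod q) * d) mod q = (S + (b + sum_list xs) * d) mod q"
    by (metis mod_add_right_eq mod_mult_left_eq)
  also have "S + (b + sum_list xs) * d = (\<Sum>i<n. xs ! i * (ys ! i + d)) + b * d"
  proof -
    have "(\<Sum>i<n. xs ! i * (ys ! i + d)) = S + (\<Sum>i<n. xs ! i) * d"
      unfolding S_def by (simp only: distrib_left sum.distrib sum_distrib_right mult.commute[of d])
    then show ?thesis unfolding sx by (simp only: distrib_right add_ac)
  qed
  finally have L2: "(S + ((b + sum_list xs) mod q) * d) mod q = ((\<Sum>i<n. xs ! i * (ys ! i + d)) + b * d) mod q" .
  have "(\<Sum>i<n. xs ! i * ((ys ! i + d) mod q)) mod q = (\<Sum>i<n. (xs ! i * ((ys ! i + d) mod q)) mod q) mod q"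
    by (rule mod_sum_eq[symmetric])
  also have "\<dots> = (\<Sum>i<n. (xs ! i * (ys ! i + d)) mod q) mod q"
    by (simp only: mod_mult_right_eq)
  also have "\<dots> = (\<Sum>i<n. xs ! i * (ys ! i + d)) mod q"
    by (rule mod_sum_eq)
  finally have "(\<Sum>i<n. xs ! i * ((ys ! i + d) mod q)) mod q = (\<Sum>i<n. xs ! i * (ys ! i + d)) mod q" .
  then have R2: "((\<Sum>i<n. xs ! i * ((ys ! i + d) mod q)) + b * d) mod q = ((\<Sum>i<n. xs ! i * (ys ! i + d)) + b * d) mod q"
    by (metis mod_add_left_eq)
  show ?thesis unfolding L R L2 R2 ..
qed

lemma key:
  assumes q: "q > 0" and x: "x \<in> basis q n" and y: "y \<in> basis q n"
  shows "Htensor q y (modadd_map q x) = Htensor q (fanout_map q y) x"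
proof -
  obtain xs b where xb: "x = xs @ [b]" "length xs = n" using x by (rule basis_snoc)
  obtain ys d where yd: "y = ys @ [d]" "length ys = n" using y by (rule basis_snoc)
  have "Htensor q y (modadd_map q x)
     = zeta q ^ (\<Sum>i<Suc n. (xs @ [(b + sum_list xs) mod q]) ! i * (ys @ [d]) ! i) / complex_of_real (sqrt (real q)) ^ Suc n"
    unfolding xb yd modadd_snoc by (rule Htensor_eq) (simp add: xb)
  also have "\<dots> = zeta q ^ (\<Sum>i<Suc n. (xs @ [b]) ! i * (map (\<lambda>v. (v + d) mod q) ys @ [d]) ! i) / complex_of_real (sqrt (real q)) ^ Suc n"
    using zeta_mod[OF q key_exp[OF xb(2) yd(2)]] by simp
  also have "\<dots> = Htensor q (fanout_map q y) x"
    unfolding xb yd fanout_snoc by (rule Htensor_eq[symmetric]) (simp add: xb)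
  finally show ?thesis .
qed

theorem mainTheorem3:
  fixes q n :: nat
  assumes "q \<ge> 2" and "n \<ge> 1"
  shows "op_eq q n (M_op q)
           (op_mult q n (op_inv q n (Htensor q))
              (op_mult q n (op_inv q n (F_op q)) (Htensor q)))"
  unfolding op_eq_def
proof (intro ballI)
  fix y x assume y: "y \<in> basis q n" and x: "x \<in> basis q n"
  have q: "q > 0" using assms by simp
  let ?H = "Htensor q" and ?Hi = "op_inv q n (Htensor q)" and ?Fi = "op_inv q n (F_op q)"
  have FH: "op_eq q n (op_mult q n ?Fi ?H) (op_mult q n ?H (M_op q))"
    unfolding op_eq_def
  proof (intro ballI)
    fix u v assume u: "u \<in> basis q n" and v: "v \<in> basis q n"
    have "op_mult q n ?Fi ?H u v = op_mult q n (perm_op (fanin_map q)) ?H u v"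
      by (rule op_congL[OF F_inv[OF q] u])
    also have "\<dots> = ?H (fanout_map q u) v"
    proof (rule perm_left[where f="fanout_map q" and y=u, OF fanout_in[OF q u]])
      fix z assume z: "z \<in> basis q n"
      show "(u = fanin_map q z) = (z = fanout_map q u)"
        using fanout_fanin[OF q z] fanin_fanout[OF q u] by auto
    qed
    also have "\<dots> = ?H u (modadd_map q v)" by (rule key[OF q v u, symmetric])
    also have "\<dots> = op_mult q n ?H (M_op q) u v"
      unfolding M_op_def by (rule perm_right[where f="modadd_map q" and x=v, OF modadd_in[OF q v], symmetric])
    finally show "op_mult q n ?Fi ?H u v = op_mult q n ?H (M_op q) u v" .
  qed
  have "op_mult q n ?Hi (op_mult q n ?Fi ?H) y x = op_mult q n ?Hi (op_mult q n ?H (M_op q)) y x"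
    by (rule op_congR[OF FH x])
  also have "\<dots> = op_mult q n (op_mult q n ?Hi ?H) (M_op q) y x" by (rule op_assoc)
  also have "\<dots> = op_mult q n op_id (M_op q) y x" by (rule op_congL[OF H_inv(1) y])
  also have "\<dots> = M_op q y x" by (rule op_idL[OF y])
  finally show "M_op q y x = op_mult q n ?Hi (op_mult q n ?Fi ?H) y x" by simp
qed

end
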